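(* Let $G$ be a group and $S\subset G$ a symmetric generating set containing the identity. (1) If $S$ is a determining set, then for any closed $S$-curve $\gamma_0$ based at $e$ there is a sequence $\gamma_1,\dots,\gamma_n$ of closed $S$-curves based at $e$ with $d_U^S(\gamma_{j-1},\gamma_j)\leq1$ for each $j\in\{1,\dots,n\}$ and $\gamma_n=(e)$. (2) If $N\in\mathbb{N}$ is such that for each closed $S$-curve $\gamma_0$ based at $e$ there is a sequence of closed $S$-curves $\gamma_1,\dots,\gamma_n$ based at $e$ with $d_U^S(\gamma_{j-1},\gamma_j)\leq N$ for each $j$ and $\gamma_n=(e)$, then $S^{N+1}$ is a determining set.
   Context: $S^k:=\{s_1\cdots s_k: s_j\in S\}$. A generating subset $S$ containing the identity is a determining set if $G$ has a presentation $\langle S\mid\mathcal{R}\rangle$ where every relator is a word of length $3$ in the letters $S\cup S^{-1}$. An $S$-curve is a finite sequence $(g_0,\dots,g_n)$ in $G$ with $g_{j-1}^{-1}g_j\in S$ for all $j$; it is closed based at $g_0$ if $g_0=g_n$. For $S$-curves $g=(g_0,\dots,g_n)$, $h=(h_0,\dots,h_m)$, $d_U^S(g,h)$ is the infimum of $r\in\mathbb{N}$ for which there is a relation $R\subset\{0,\dots,n\}\times\{0,\dots,m\}$ such that every $i\in\{0,\dots,n\}$ and every $j\in\{0,\dots,m\}$ appear in some pair of $R$; if $(i_1,j_1),(i_2,j_2)\in R$ and $i_1<i_2$ then $j_1\leq j_2$; and $g_i^{-1}h_j\in S^r$ for all $(i,j)\in R$. *)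

theory Defs
  imports "HOL-Algebra.Algebra" "HOL-Library.Extended_Nat"
begin

fun set_pow :: "('a, 'b) monoid_scheme \<Rightarrow> 'a set \<Rightarrow> nat \<Rightarrow> 'a set" where
  "set_pow G S 0 = {\<one>\<^bsub>G\<^esub>}"
| "set_pow G S (Suc k) = {x \<otimes>\<^bsub>G\<^esub> s | x s. x \<in> set_pow G S k \<and> s \<in> S}"

(* Formal words in the letters S \<union> S^{-1}: a letter (s, False) stands for s,
   (s, True) for the formal inverse s^{-1}. *)
type_synonym 'a word = "('a \<times> bool) list"

definition letter_val :: "('a, 'b) monoid_scheme \<Rightarrow> 'a \<times> bool \<Rightarrow> 'a" where
  "letter_val G l = (if snd l then inv\<^bsub>G\<^esub> (fst l) else fst l)"

definition word_eval :: "('a, 'b) monoid_scheme \<Rightarrow> 'a word \<Rightarrow> 'a" where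
  "word_eval G w = foldr (\<lambda>l x. letter_val G l \<otimes>\<^bsub>G\<^esub> x) w \<one>\<^bsub>G\<^esub>"

definition is_word :: "'a set \<Rightarrow> 'a word \<Rightarrow> bool" where
  "is_word S w \<longleftrightarrow> fst ` set w \<subseteq> S"

(* One elementary step of the congruence of the free group on S modulo the
   normal closure of R: delete a cancelling pair or a relator (from anywhere). *)
definition pres_step :: "'a set \<Rightarrow> 'a word set \<Rightarrow> ('a word \<times> 'a word) set" where
  "pres_step S R =
     {(u @ [(s, b), (s, \<not> b)] @ v, u @ v) | u v s b. is_word S u \<and> is_word S v \<and> s \<in> S}
   \<union> {(u @ r @ v, u @ v) | u v r. is_word S u \<and> is_word S v \<and> r \<in> R}"

definition pres_trivial :: "'a set \<Rightarrow> 'a word set \<Rightarrow> 'a word \<Rightarrow> bool" where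
  "pres_trivial S R w \<longleftrightarrow> (w, []) \<in> (pres_step S R \<union> (pres_step S R)\<inverse>)\<^sup>*"

definition has_presentation :: "('a, 'b) monoid_scheme \<Rightarrow> 'a set \<Rightarrow> 'a word set \<Rightarrow> bool" where
  "has_presentation G S R \<longleftrightarrow>
     S \<subseteq> carrier G \<and> generate G S = carrier G \<and>
     (\<forall>r\<in>R. is_word S r \<and> word_eval G r = \<one>\<^bsub>G\<^esub>) \<and>
     (\<forall>w. is_word S w \<and> word_eval G w = \<one>\<^bsub>G\<^esub> \<longrightarrow> pres_trivial S R w)"

definition determining_set :: "('a, 'b) monoid_scheme \<Rightarrow> 'a set \<Rightarrow> bool" where
  "determining_set G S \<longleftrightarrow>
     S \<subseteq> carrier G \<and> \<one>\<^bsub>G\<^esub> \<in> S \<and> generate G S = carrier G \<and>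
     (\<exists>R. (\<forall>r\<in>R. length r = 3) \<and> has_presentation G S R)"

definition S_curve :: "('a, 'b) monoid_scheme \<Rightarrow> 'a set \<Rightarrow> 'a list \<Rightarrow> bool" where
  "S_curve G S g \<longleftrightarrow> g \<noteq> [] \<and> set g \<subseteq> carrier G \<and>
     (\<forall>j. 0 < j \<and> j < length g \<longrightarrow> inv\<^bsub>G\<^esub> (g ! (j - 1)) \<otimes>\<^bsub>G\<^esub> (g ! j) \<in> S)"

definition closed_S_curve_at :: "('a, 'b) monoid_scheme \<Rightarrow> 'a set \<Rightarrow> 'a \<Rightarrow> 'a list \<Rightarrow> bool" where
  "closed_S_curve_at G S x g \<longleftrightarrow> S_curve G S g \<and> hd g = x \<and> last g = x"

definition dU_witness :: "('a, 'b) monoid_scheme \<Rightarrow> 'a set \<Rightarrow> 'a list \<Rightarrow> 'a list \<Rightarrow> nat \<Rightarrow> bool" where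
  "dU_witness G S g h r \<longleftrightarrow> (\<exists>Rel. Rel \<subseteq> {0..<length g} \<times> {0..<length h} \<and>
     (\<forall>i<length g. \<exists>j. (i, j) \<in> Rel) \<and> (\<forall>j<length h. \<exists>i. (i, j) \<in> Rel) \<and>
     (\<forall>i1 j1 i2 j2. (i1, j1) \<in> Rel \<and> (i2, j2) \<in> Rel \<and> i1 < i2 \<longrightarrow> j1 \<le> j2) \<and>
     (\<forall>(i, j)\<in>Rel. inv\<^bsub>G\<^esub> (g ! i) \<otimes>\<^bsub>G\<^esub> (h ! j) \<in> set_pow G S r))"

(* d_U^S as an infimum in enat (infinite if no witness exists) *)
definition dU :: "('a, 'b) monoid_scheme \<Rightarrow> 'a set \<Rightarrow> 'a list \<Rightarrow> 'a list \<Rightarrow> enat" where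
  "dU G S g h = (INF r \<in> {r. dU_witness G S g h r}. enat r)"

end

theory Submission
  imports Defs
begin


definition peq :: "'a set \<Rightarrow> 'a word set \<Rightarrow> ('a word \<times> 'a word) set" where
  "peq S R = (pres_step S R \<union> (pres_step S R)\<inverse>)\<^sup>*"

lemma is_word_simps[simp]:
  "is_word S []" "is_word S (l # w) \<longleftrightarrow> fst l \<in> S \<and> is_word S w"
  "is_word S (x @ y) \<longleftrightarrow> is_word S x \<and> is_word S y"
  by (auto simp: is_word_def)

lemma is_word_take: "is_word S w \<Longrightarrow> is_word S (take k w)"
  unfolding is_word_def by (meson image_mono order_trans set_take_subset)

lemma is_word_mono: "is_word S w \<Longrightarrow> S \<subseteq> T \<Longrightarrow> is_word T w"
  unfolding is_word_def by auto

lemma pres_step_cI: "is_word S u \<Longrightarrow> is_word S v \<Longrightarrow> s \<in> S \<Longrightarrow> (u @ [(s,b),(s,\<not>b)] @ v, u @ v) \<in> pres_step S R"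
  unfolding pres_step_def by (rule UnI1) blast
lemma pres_step_rI: "is_word S u \<Longrightarrow> is_word S v \<Longrightarrow> r \<in> R \<Longrightarrow> (u @ r @ v, u @ v) \<in> pres_step S R"
  unfolding pres_step_def by (rule UnI2) blast

lemma pres_step_ctx:
  assumes "(x, y) \<in> pres_step S R" "is_word S a" "is_word S b"
  shows "(a @ x @ b, a @ y @ b) \<in> pres_step S R"
proof -
  from assms(1) consider
    (c) u v s bb where "x = u @ [(s, bb), (s, \<not> bb)] @ v" "y = u @ v" "is_word S u" "is_word S v" "s \<in> S"
  | (r) u v r where "x = u @ r @ v" "y = u @ v" "is_word S u" "is_word S v" "r \<in> R"
    unfolding pres_step_def by blast
  then show ?thesis
  proof cases
    case c
    have "a @ x @ b = (a @ u) @ [(s, bb), (s, \<not> bb)] @ (v @ b)" "a @ y @ b = (a @ u) @ (v @ b)"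
      using c by auto
    moreover have "is_word S (a @ u)" "is_word S (v @ b)" using c assms by auto
    ultimately show ?thesis using c(5) pres_step_cI by metis
  next
    case r
    have "a @ x @ b = (a @ u) @ r @ (v @ b)" "a @ y @ b = (a @ u) @ (v @ b)"
      using r by auto
    moreover have "is_word S (a @ u)" "is_word S (v @ b)" using r assms by auto
    ultimately show ?thesis using r(5) pres_step_rI by metis
  qed
qed

lemma peq_ctx:
  assumes "(x, y) \<in> peq S R" "is_word S a" "is_word S b"
  shows "(a @ x @ b, a @ y @ b) \<in> peq S R"
  using assms(1) unfolding peq_def
proof (induction rule: rtrancl_induct)
  case base then show ?case by simp
next
  case (step y z)
  then have "(a @ y @ b, a @ z @ b) \<in> pres_step S R \<union> (pres_step S R)\<inverse>"
    using pres_step_ctx[OF _ assms(2,3)] by blast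
  with step show ?case by (meson rtrancl.rtrancl_into_rtrancl)
qed

lemma peq_refl: "(x, x) \<in> peq S R" unfolding peq_def by simp

lemma peq_sym: "(x, y) \<in> peq S R \<Longrightarrow> (y, x) \<in> peq S R"
  unfolding peq_def by (metis converse_Un converse_converse rtrancl_converseI sup_commute)

lemma peq_trans: "(x, y) \<in> peq S R \<Longrightarrow> (y, z) \<in> peq S R \<Longrightarrow> (x, z) \<in> peq S R"
  unfolding peq_def by (rule rtrancl_trans)

lemma peq_left: "(x, y) \<in> peq S R \<Longrightarrow> is_word S a \<Longrightarrow> (a @ x, a @ y) \<in> peq S R"
  using peq_ctx[of x y S R a "[]"] by simp

lemma peq_right: "(x, y) \<in> peq S R \<Longrightarrow> is_word S b \<Longrightarrow> (x @ b, y @ b) \<in> peq S R"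
  using peq_ctx[of x y S R "[]" b] by simp

lemma peq_app: "(x, y) \<in> peq S R \<Longrightarrow> (x', y') \<in> peq S R \<Longrightarrow> is_word S x' \<Longrightarrow> is_word S y
  \<Longrightarrow> (x @ x', y @ y') \<in> peq S R"
  by (meson peq_left peq_right peq_trans)

lemma peq_cancel: "is_word S u \<Longrightarrow> is_word S v \<Longrightarrow> s \<in> S \<Longrightarrow>
   (u @ [(s, b), (s, \<not> b)] @ v, u @ v) \<in> peq S R"
  unfolding peq_def by (intro r_into_rtrancl UnI1 pres_step_cI)

lemma peq_rel: "is_word S u \<Longrightarrow> is_word S v \<Longrightarrow> r \<in> R \<Longrightarrow>
   (u @ r @ v, u @ v) \<in> peq S R"
  unfolding peq_def by (intro r_into_rtrancl UnI1 pres_step_rI)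

lemma pres_step_words:
  assumes "(x, y) \<in> pres_step S R" "\<forall>r\<in>R. is_word S r"
  shows "is_word S x \<and> is_word S y"
  using assms unfolding pres_step_def by auto



definition curve :: "('a, 'b) monoid_scheme \<Rightarrow> 'a word \<Rightarrow> 'a list" where
  "curve G u = map (\<lambda>k. word_eval G (take k u)) [0..<Suc (length u)]"

definition wordof :: "('a, 'b) monoid_scheme \<Rightarrow> 'a list \<Rightarrow> 'a word" where
  "wordof G g = map (\<lambda>k. (inv\<^bsub>G\<^esub> (g ! k) \<otimes>\<^bsub>G\<^esub> g ! (Suc k), False)) [0..<length g - 1]"

lemma curve_length[simp]: "length (curve G u) = Suc (length u)"
  by (simp add: curve_def)

lemma curve_nth: "k \<le> length u \<Longrightarrow> curve G u ! k = word_eval G (take k u)"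
  unfolding curve_def by (simp del: upt_Suc add: nth_map_upt less_Suc_eq_le)

lemma wordof_length[simp]: "length (wordof G g) = length g - 1"
  by (simp add: wordof_def)

lemma wordof_nth: "k < length g - 1 \<Longrightarrow> wordof G g ! k = (inv\<^bsub>G\<^esub> (g ! k) \<otimes>\<^bsub>G\<^esub> g ! (Suc k), False)"
  by (simp add: wordof_def)

context group begin

lemma letter_val_carrier: "fst l \<in> carrier G \<Longrightarrow> letter_val G l \<in> carrier G"
  unfolding letter_val_def by auto

lemma letter_val_S: "fst l \<in> S \<Longrightarrow> \<forall>s\<in>S. inv s \<in> S \<Longrightarrow> letter_val G l \<in> S"
  unfolding letter_val_def by auto

lemma word_eval_Nil[simp]: "word_eval G [] = \<one>"
  by (simp add: word_eval_def)

lemma word_eval_Cons[simp]: "word_eval G (l # w) = letter_val G l \<otimes> word_eval G w"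
  by (simp add: word_eval_def)

lemma word_eval_carrier: "is_word (carrier G) w \<Longrightarrow> word_eval G w \<in> carrier G"
  by (induction w) (auto simp: letter_val_carrier)

lemma word_eval_append: "is_word (carrier G) x \<Longrightarrow> is_word (carrier G) y \<Longrightarrow>
   word_eval G (x @ y) = word_eval G x \<otimes> word_eval G y"
  by (induction x) (auto simp: m_assoc word_eval_carrier letter_val_carrier)

lemma eval_take_Suc: "is_word (carrier G) u \<Longrightarrow> k < length u \<Longrightarrow>
   word_eval G (take (Suc k) u) = word_eval G (take k u) \<otimes> letter_val G (u ! k)"
proof -
  assume a: "is_word (carrier G) u" "k < length u"
  then have "take (Suc k) u = take k u @ [u ! k]" by (simp add: take_Suc_conv_app_nth)
  moreover have "fst (u ! k) \<in> carrier G" using a unfolding is_word_def by auto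
  ultimately show ?thesis using a
    by (simp add: word_eval_append is_word_take letter_val_carrier)
qed

lemma curve_hd: "hd (curve G u) = \<one>"
  by (simp add: curve_def hd_map del: upt_Suc)

lemma curve_last: "last (curve G u) = word_eval G u"
proof -
  have "curve G u \<noteq> []" using curve_length[of G u] by (metis list.size(3) nat.distinct(1))
  then show ?thesis using curve_nth[of "length u" u G] by (simp add: last_conv_nth)
qed

lemma curve_Nil: "curve G [] = [\<one>]"
  by (simp add: curve_def)

lemma curve_S_curve:
  assumes "is_word S u" "S \<subseteq> carrier G" "\<forall>s\<in>S. inv s \<in> S"
  shows "S_curve G S (curve G u)"
proof -
  have uc: "is_word (carrier G) u" using assms is_word_mono by blast
  have "set (curve G u) \<subseteq> carrier G"
    unfolding curve_def using word_eval_carrier is_word_take[OF uc] uc by auto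
  moreover have "inv (curve G u ! (j - 1)) \<otimes> curve G u ! j \<in> S" if jj: "0 < j" "j < Suc (length u)" for j
  proof -
    obtain k where k: "j = Suc k" using jj by (cases j) auto
    have kl: "k < length u" using jj k by simp
    have l: "fst (u ! k) \<in> S" using assms(1) kl unfolding is_word_def by auto
    have "inv (curve G u ! (j - 1)) \<otimes> curve G u ! j
        = inv (word_eval G (take k u)) \<otimes> (word_eval G (take k u) \<otimes> letter_val G (u ! k))"
      using k kl by (simp add: curve_nth eval_take_Suc[OF uc])
    also have "\<dots> = letter_val G (u ! k)"
      using l assms(2) by (simp add: m_assoc[symmetric] word_eval_carrier is_word_take[OF uc] letter_val_carrier subsetD)
    finally show ?thesis using letter_val_S[OF l assms(3)] by simp
  qed
  ultimately show ?thesis unfolding S_curve_def curve_def by auto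
qed

lemma wordof_is_word:
  assumes "S_curve G S g" shows "is_word S (wordof G g)"
proof -
  have "inv (g!k) \<otimes> g!Suc k \<in> S" if "k < length g - 1" for k
    using assms that unfolding S_curve_def by (auto dest: spec[of _ "Suc k"])
  then show ?thesis unfolding is_word_def wordof_def by auto
qed

lemma curve_wordof:
  assumes "S_curve G S g" "hd g = \<one>" "S \<subseteq> carrier G"
  shows "curve G (wordof G g) = g"
proof -
  have ne: "g \<noteq> []" and gc: "set g \<subseteq> carrier G" using assms unfolding S_curve_def by auto
  have wc: "is_word (carrier G) (wordof G g)" using wordof_is_word[OF assms(1)] assms(3) is_word_mono by blast
  have "word_eval G (take k (wordof G g)) = g ! k" if "k < length g" for k
    using that
  proof (induction k)
    case 0 then show ?case using ne assms(2) by (simp add: hd_conv_nth)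
  next
    case (Suc k)
    have k: "k < length (wordof G g)" using Suc by simp
    have "word_eval G (take (Suc k) (wordof G g)) = g ! k \<otimes> (inv (g ! k) \<otimes> g ! Suc k)"
      using Suc k by (simp add: eval_take_Suc[OF wc k] wordof_nth letter_val_def)
    also have "\<dots> = g ! Suc k" using Suc gc
      by (simp add: m_assoc[symmetric] subsetD)
    finally show ?case .
  qed
  then show ?thesis using ne by (intro nth_equalityI) (auto simp: curve_nth)
qed

lemma wordof_curve:
  assumes "is_word (carrier G) u" "\<forall>l\<in>set u. snd l = False"
  shows "wordof G (curve G u) = u"
proof (intro nth_equalityI)
  show "length (wordof G (curve G u)) = length u" by simp
  fix k assume "k < length (wordof G (curve G u))"
  then have k: "k < length u" by simp
  have l: "fst (u ! k) \<in> carrier G" "snd (u ! k) = False" using assms k unfolding is_word_def by auto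
  have "wordof G (curve G u) ! k = (inv (word_eval G (take k u)) \<otimes> (word_eval G (take k u) \<otimes> letter_val G (u ! k)), False)"
    using k by (simp add: wordof_nth curve_nth eval_take_Suc[OF assms(1) k])
  also have "\<dots> = u ! k" using l
    by (simp add: m_assoc[symmetric] word_eval_carrier is_word_take[OF assms(1)] letter_val_carrier letter_val_def prod_eq_iff)
  finally show "wordof G (curve G u) ! k = u ! k" .
qed

lemma eval_wordof:
  assumes "S_curve G S g" "hd g = \<one>" "S \<subseteq> carrier G"
  shows "word_eval G (wordof G g) = last g"
  using curve_last[of "wordof G g"] curve_wordof[OF assms] by simp

end


context group begin

lemma set_pow_one: "S \<subseteq> carrier G \<Longrightarrow> set_pow G S 1 = S"
  by (auto simp: subsetD) (metis l_one subsetD)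

lemma dU_le: "dU_witness G S g h r \<Longrightarrow> dU G S g h \<le> enat r"
  unfolding dU_def by (rule INF_lower) simp

lemma dU_swap1:
  assumes S: "S \<subseteq> carrier G" "\<forall>s\<in>S. inv s \<in> S"
    and gc: "set g \<subseteq> carrier G" "set h \<subseteq> carrier G"
    and w: "dU_witness G S g h 1"
  shows "dU_witness G S h g 1"
proof -
  obtain Rel where R: "Rel \<subseteq> {0..<length g} \<times> {0..<length h}"
    "\<forall>i<length g. \<exists>j. (i, j) \<in> Rel" "\<forall>j<length h. \<exists>i. (i, j) \<in> Rel"
    "\<forall>i1 j1 i2 j2. (i1, j1) \<in> Rel \<and> (i2, j2) \<in> Rel \<and> i1 < i2 \<longrightarrow> j1 \<le> j2"
    "\<forall>(i, j)\<in>Rel. inv (g ! i) \<otimes> (h ! j) \<in> S"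
    using w unfolding dU_witness_def set_pow_one[OF S(1)] by blast
  have v: "inv (h ! j) \<otimes> (g ! i) \<in> S" if "(i, j) \<in> Rel" for i j
  proof -
    have "i < length g" "j < length h" using R(1) that by auto
    then have i: "g ! i \<in> carrier G" "h ! j \<in> carrier G" using gc by (meson nth_mem subsetD)+
    have "inv (inv (g ! i) \<otimes> (h ! j)) \<in> S" using R(5) that S(2) by auto
    then show ?thesis using i by (simp add: inv_mult_group)
  qed
  show ?thesis unfolding dU_witness_def set_pow_one[OF S(1)]
    apply (rule exI[of _ "Rel\<inverse>"])
    using R v by (auto simp: not_less[symmetric])
qed

lemma insert_witness:
  assumes S: "S \<subseteq> carrier G" "\<one> \<in> S"
    and w: "is_word (carrier G) u" "is_word (carrier G) x" "is_word (carrier G) v"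
    and ex: "word_eval G x = \<one>"
    and pre: "\<forall>k\<le>length x. inv (word_eval G (take k x)) \<in> S"
  shows "dU_witness G S (curve G (u @ x @ v)) (curve G (u @ v)) 1"
proof -
  define a where "a = length u"
  define b where "b = length x"
  define \<phi> where "\<phi> i = (if i \<le> a then i else if i \<le> a + b then a else i - b)" for i
  define Rel where "Rel = {(i, \<phi> i) | i. i < Suc (length (u @ x @ v))}"
  have eu: "word_eval G u \<in> carrier G" using w word_eval_carrier by blast
  have val: "inv (curve G (u @ x @ v) ! i) \<otimes> curve G (u @ v) ! \<phi> i \<in> S"
    if il: "i < Suc (length (u @ x @ v))" for i
  proof (cases "i \<le> a")
    case True
    then have "curve G (u @ x @ v) ! i = word_eval G (take i u)" "curve G (u @ v) ! \<phi> i = word_eval G (take i u)"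
      using il by (auto simp: curve_nth \<phi>_def a_def)
    then show ?thesis using S w by (simp add: word_eval_carrier is_word_take)
  next
    case F1: False
    show ?thesis
    proof (cases "i \<le> a + b")
      case True
      have t: "take i (u @ x @ v) = u @ take (i - a) x" using True F1 by (simp add: a_def b_def)
      have q: "word_eval G (take (i - a) x) \<in> carrier G" using w word_eval_carrier is_word_take by blast
      have "curve G (u @ x @ v) ! i = word_eval G u \<otimes> word_eval G (take (i - a) x)"
        using il t w by (simp add: curve_nth word_eval_append is_word_take)
      moreover have "curve G (u @ v) ! \<phi> i = word_eval G u" using True F1 by (simp add: curve_nth \<phi>_def a_def)
      ultimately have "inv (curve G (u @ x @ v) ! i) \<otimes> curve G (u @ v) ! \<phi> i = inv (word_eval G (take (i - a) x))"
        using eu q by (simp add: inv_mult_group m_assoc)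
      moreover have "i - a \<le> length x" using True F1 by (simp add: b_def)
      ultimately show ?thesis using pre by simp
    next
      case False
      have t1: "take i (u @ x @ v) = u @ x @ take (i - a - b) v" using False F1 by (simp add: a_def b_def)
      have t2: "take (i - b) (u @ v) = u @ take (i - a - b) v" using False F1 by (simp add: a_def b_def add.commute)
      have "curve G (u @ x @ v) ! i = word_eval G u \<otimes> word_eval G (take (i - a - b) v)"
        using il t1 w ex by (simp add: curve_nth word_eval_append is_word_take word_eval_carrier add.commute)
      moreover have "curve G (u @ v) ! \<phi> i = word_eval G u \<otimes> word_eval G (take (i - a - b) v)"
        using il t2 w False F1 by (simp add: curve_nth word_eval_append is_word_take \<phi>_def a_def b_def add.commute)
      moreover have "word_eval G u \<otimes> word_eval G (take (i - a - b) v) \<in> carrier G"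
        using w word_eval_carrier is_word_take by blast
      ultimately show ?thesis using S by simp
    qed
  qed
  have sub: "Rel \<subseteq> {0..<length (curve G (u @ x @ v))} \<times> {0..<length (curve G (u @ v))}"
    unfolding Rel_def \<phi>_def a_def b_def by auto
  have c1: "\<forall>i<length (curve G (u @ x @ v)). \<exists>j. (i, j) \<in> Rel" unfolding Rel_def by auto
  have c2: "\<exists>i. (i, j) \<in> Rel" if "j < length (curve G (u @ v))" for j
  proof (cases "j \<le> a")
    case True
    then have "(j, \<phi> j) \<in> Rel" "\<phi> j = j" unfolding Rel_def \<phi>_def a_def using that by auto
    then show ?thesis by metis
  next
    case False
    then have "(j + b, \<phi> (j + b)) \<in> Rel" "\<phi> (j + b) = j" unfolding Rel_def \<phi>_def a_def b_def using that by auto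
    then show ?thesis by metis
  qed
  have mono: "\<forall>i1 j1 i2 j2. (i1, j1) \<in> Rel \<and> (i2, j2) \<in> Rel \<and> i1 < i2 \<longrightarrow> j1 \<le> j2"
    unfolding Rel_def \<phi>_def by auto
  have vals: "\<forall>(i, j)\<in>Rel. inv (curve G (u @ x @ v) ! i) \<otimes> (curve G (u @ v) ! j) \<in> set_pow G S 1"
    unfolding set_pow_one[OF S(1)] Rel_def using val by auto
  show ?thesis unfolding dU_witness_def using sub c1 c2 mono vals by blast
qed

lemma three_elems: "length r = 3 \<Longrightarrow> \<exists>l1 l2 l3. r = [l1, l2, l3]"
  by (metis length_0_conv length_Suc_conv numeral_3_eq_3)

lemma le3_cases: "(k::nat) \<le> 3 \<Longrightarrow> k = 0 \<or> k = 1 \<or> k = 2 \<or> k = 3" by arith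
lemma le2_cases: "(k::nat) \<le> 2 \<Longrightarrow> k = 0 \<or> k = 1 \<or> k = 2" by arith

lemma step_witness:
  assumes S: "S \<subseteq> carrier G" "\<one> \<in> S" "\<forall>s\<in>S. inv s \<in> S"
    and R: "\<forall>r\<in>R. length r = 3 \<and> is_word S r \<and> word_eval G r = \<one>"
    and st: "(y, z) \<in> pres_step S R"
  shows "dU_witness G S (curve G y) (curve G z) 1"
proof -
  from st consider
    (c) u v s bb where "y = u @ [(s, bb), (s, \<not> bb)] @ v" "z = u @ v" "is_word S u" "is_word S v" "s \<in> S"
  | (r) u v r where "y = u @ r @ v" "z = u @ v" "is_word S u" "is_word S v" "r \<in> R"
    unfolding pres_step_def by blast
  then show ?thesis
  proof cases
    case c
    let ?x = "[(s, bb), (s, \<not> bb)]"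
    have sc: "s \<in> carrier G" using c S by auto
    have ex: "word_eval G ?x = \<one>" using sc by (cases bb) (auto simp: letter_val_def)
    have pre: "\<forall>k\<le>length ?x. inv (word_eval G (take k ?x)) \<in> S"
    proof (intro allI impI)
      fix k assume "k \<le> length ?x"
      then have "k \<le> 2" by simp
      then have "k = 0 \<or> k = 1 \<or> k = 2" by arith
      then show "inv (word_eval G (take k ?x)) \<in> S"
        using sc S c by (cases bb) (auto simp: letter_val_def)
    qed
    have wu: "is_word (carrier G) u" and wv: "is_word (carrier G) v" and wx: "is_word (carrier G) ?x"
      using c S is_word_mono by auto
    show ?thesis unfolding c(1,2) by (rule insert_witness[OF S(1,2) wu wx wv ex pre])
  next
    case r
    obtain l1 l2 l3 where r3: "r = [l1, l2, l3]" using R r three_elems by blast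
    have lS: "fst l1 \<in> S" "fst l2 \<in> S" "fst l3 \<in> S" using R r r3 by auto
    have v: "letter_val G l1 \<in> S" "letter_val G l2 \<in> S" "letter_val G l3 \<in> S"
      using lS letter_val_S S(3) by auto
    have vc: "letter_val G l1 \<in> carrier G" "letter_val G l2 \<in> carrier G" "letter_val G l3 \<in> carrier G"
      using v S by auto
    have e: "word_eval G r = \<one>" using R r by auto
    then have e': "(letter_val G l1 \<otimes> letter_val G l2) \<otimes> letter_val G l3 = \<one>"
      using r3 vc by (simp add: m_assoc)
    have i2: "inv (letter_val G l1 \<otimes> letter_val G l2) = letter_val G l3"
      using e' vc by (metis inv_equality inv_comm m_closed)
    have pre: "\<forall>k\<le>length r. inv (word_eval G (take k r)) \<in> S"
    proof (intro allI impI)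
      fix k assume "k \<le> length r"
      then have "k \<le> 3" using r3 by simp
      then have "k = 0 \<or> k = 1 \<or> k = 2 \<or> k = 3" by arith
      then show "inv (word_eval G (take k r)) \<in> S"
        using S r3 v vc i2 e by auto
    qed
    have wu: "is_word (carrier G) u" and wv: "is_word (carrier G) v" and wx: "is_word (carrier G) r"
      using r(3,4,5) S(1) R is_word_mono by blast+
    show ?thesis unfolding r(1,2) by (rule insert_witness[OF S(1,2) wu wx wv e pre])
  qed
qed

lemma eval_ins: "is_word (carrier G) u \<Longrightarrow> is_word (carrier G) x \<Longrightarrow> is_word (carrier G) v
  \<Longrightarrow> word_eval G x = \<one> \<Longrightarrow> word_eval G (u @ x @ v) = word_eval G (u @ v)"
  by (simp add: word_eval_append word_eval_carrier)

lemma step_eval: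
  assumes S: "S \<subseteq> carrier G"
    and R: "\<forall>r\<in>R. is_word S r \<and> word_eval G r = \<one>"
    and st: "(y, z) \<in> pres_step S R"
  shows "is_word S y \<and> is_word S z \<and> word_eval G y = word_eval G z"
proof -
  from st consider
    (c) u v s bb where "y = u @ [(s, bb), (s, \<not> bb)] @ v" "z = u @ v" "is_word S u" "is_word S v" "s \<in> S"
  | (r) u v r where "y = u @ r @ v" "z = u @ v" "is_word S u" "is_word S v" "r \<in> R"
    unfolding pres_step_def by blast
  then show ?thesis
  proof cases
    case c
    have sc: "s \<in> carrier G" using c S by auto
    let ?x = "[(s, bb), (s, \<not> bb)]"
    have ex: "word_eval G ?x = \<one>" using sc by (cases bb) (auto simp: letter_val_def)
    have wu: "is_word (carrier G) u" and wv: "is_word (carrier G) v" and wx: "is_word (carrier G) ?x"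
      using c S is_word_mono by auto
    have "word_eval G (u @ ?x @ v) = word_eval G (u @ v)" by (rule eval_ins[OF wu wx wv ex])
    then show ?thesis unfolding c(1,2) using c(3,4,5) by simp
  next
    case r
    have wu: "is_word (carrier G) u" and wv: "is_word (carrier G) v" and wx: "is_word (carrier G) r"
      using r(3,4,5) S(1) R is_word_mono by blast+
    have ex: "word_eval G r = \<one>" using r(5) R by blast
    have "word_eval G (u @ r @ v) = word_eval G (u @ v)" by (rule eval_ins[OF wu wx wv ex])
    moreover have "is_word S r" using r(5) R by blast
    ultimately show ?thesis unfolding r(1,2) using r(3,4) by simp
  qed
qed

end


context group begin

lemma part1:
  assumes S: "S \<subseteq> carrier G" "\<forall>s\<in>S. inv s \<in> S" "\<one> \<in> S"
    and det: "determining_set G S"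
    and c: "closed_S_curve_at G S \<one> \<gamma>0"
  shows "\<exists>(n::nat) (\<gamma>::nat \<Rightarrow> 'a list). \<gamma> 0 = \<gamma>0 \<and>
                  (\<forall>j\<in>{1..n}. closed_S_curve_at G S \<one> (\<gamma> j) \<and>
                               dU G S (\<gamma> (j - 1)) (\<gamma> j) \<le> 1) \<and>
                  \<gamma> n = [\<one>]"
proof -
  obtain R where R3: "\<forall>r\<in>R. length r = 3" and pres: "has_presentation G S R"
    using det unfolding determining_set_def by auto
  have R: "\<forall>r\<in>R. length r = 3 \<and> is_word S r \<and> word_eval G r = \<one>"
    using R3 pres unfolding has_presentation_def by auto
  have R': "\<forall>r\<in>R. is_word S r \<and> word_eval G r = \<one>" using R by auto
  have triv: "\<And>w. is_word S w \<Longrightarrow> word_eval G w = \<one> \<Longrightarrow> pres_trivial S R w"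
    using pres unfolding has_presentation_def by auto
  have sc: "S_curve G S \<gamma>0" "hd \<gamma>0 = \<one>" "last \<gamma>0 = \<one>"
    using c unfolding closed_S_curve_at_def by auto
  let ?w = "wordof G \<gamma>0"
  have ww: "is_word S ?w" using wordof_is_word[OF sc(1)] .
  have we: "word_eval G ?w = \<one>" using eval_wordof[OF sc(1,2) S(1)] sc(3) by simp
  let ?P = "pres_step S R \<union> (pres_step S R)\<inverse>"
  have "(?w, []) \<in> ?P\<^sup>*" using triv[OF ww we] unfolding pres_trivial_def .
  then obtain n where "(?w, []) \<in> ?P ^^ n" using rtrancl_power by blast
  then obtain f where f: "f 0 = ?w" "f n = []" "\<forall>i<n. (f i, f (Suc i)) \<in> ?P"
    using relpow_fun_conv by metis
  have fw: "is_word S (f j) \<and> word_eval G (f j) = \<one>" if "j \<le> n" for j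
    using that
  proof (induction j)
    case 0 then show ?case using f ww we by simp
  next
    case (Suc j)
    then have IH: "is_word S (f j) \<and> word_eval G (f j) = \<one>" and st: "(f j, f (Suc j)) \<in> ?P"
      using f by auto
    from st show ?case
    proof
      assume "(f j, f (Suc j)) \<in> pres_step S R"
      then show ?thesis using step_eval[OF S(1) R'] IH by metis
    next
      assume "(f j, f (Suc j)) \<in> (pres_step S R)\<inverse>"
      then have "(f (Suc j), f j) \<in> pres_step S R" by simp
      then show ?thesis using step_eval[OF S(1) R'] IH by metis
    qed
  qed
  define \<gamma> where "\<gamma> j = curve G (f j)" for j
  have cl: "closed_S_curve_at G S \<one> (\<gamma> j)" if "j \<le> n" for j
    using fw[OF that] curve_S_curve[OF _ S(1,2)] curve_hd curve_last
    unfolding closed_S_curve_at_def \<gamma>_def by auto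
  have cc: "set (\<gamma> j) \<subseteq> carrier G" if "j \<le> n" for j
    using cl[OF that] unfolding closed_S_curve_at_def S_curve_def by auto
  have d: "dU G S (\<gamma> (j - 1)) (\<gamma> j) \<le> 1" if jn: "j \<in> {1..n}" for j
  proof -
    obtain i where i: "j = Suc i" "i < n" using jn by (cases j) auto
    then have st: "(f i, f (Suc i)) \<in> ?P" using f by auto
    have "dU_witness G S (\<gamma> i) (\<gamma> (Suc i)) 1"
      using st
    proof
      assume "(f i, f (Suc i)) \<in> pres_step S R"
      then show ?thesis using step_witness[OF S(1,3,2) R] unfolding \<gamma>_def by blast
    next
      assume "(f i, f (Suc i)) \<in> (pres_step S R)\<inverse>"
      then have "(f (Suc i), f i) \<in> pres_step S R" by simp
      then have "dU_witness G S (\<gamma> (Suc i)) (\<gamma> i) 1"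
        using step_witness[OF S(1,3,2) R] unfolding \<gamma>_def by blast
      then show ?thesis using dU_swap1[OF S(1,2)] cc i by simp
    qed
    then have "dU G S (\<gamma> i) (\<gamma> (Suc i)) \<le> enat 1" by (rule dU_le)
    then show ?thesis using i by (simp add: one_enat_def)
  qed
  have g0: "\<gamma> 0 = \<gamma>0" unfolding \<gamma>_def f(1) using curve_wordof[OF sc(1,2) S(1)] .
  have gn: "\<gamma> n = [\<one>]" unfolding \<gamma>_def f(2) by (rule curve_Nil)
  show ?thesis
    apply (rule exI[of _ n], rule exI[of _ \<gamma>])
    using g0 gn cl d by auto
qed

end


definition rels3 :: "('a, 'b) monoid_scheme \<Rightarrow> 'a set \<Rightarrow> 'a word set" where
  "rels3 G T = {r. length r = 3 \<and> is_word T r \<and> word_eval G r = \<one>\<^bsub>G\<^esub>}"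

context group begin

lemma set_pow_carrier: "S \<subseteq> carrier G \<Longrightarrow> set_pow G S k \<subseteq> carrier G"
  by (induction k) auto

lemmas set_pow_Suc = set_pow.simps(2)
declare set_pow.simps(2)[simp del]

lemma set_pow_mult: "x \<in> set_pow G S k \<Longrightarrow> s \<in> S \<Longrightarrow> x \<otimes> s \<in> set_pow G S (Suc k)"
  unfolding set_pow_Suc by blast

lemma set_pow_SucE: "y \<in> set_pow G S (Suc k) \<Longrightarrow> (\<And>x s. y = x \<otimes> s \<Longrightarrow> x \<in> set_pow G S k \<Longrightarrow> s \<in> S \<Longrightarrow> P) \<Longrightarrow> P"
  unfolding set_pow_Suc by blast

lemma set_pow_Suc_mono: "S \<subseteq> carrier G \<Longrightarrow> \<one> \<in> S \<Longrightarrow> set_pow G S k \<subseteq> set_pow G S (Suc k)"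
proof
  fix x assume a: "S \<subseteq> carrier G" "\<one> \<in> S" "x \<in> set_pow G S k"
  then have "x \<in> carrier G" using set_pow_carrier[OF a(1)] by blast
  then have "x = x \<otimes> \<one>" by simp
  then show "x \<in> set_pow G S (Suc k)" using a set_pow_mult by metis
qed

lemma set_pow_mono: "S \<subseteq> carrier G \<Longrightarrow> \<one> \<in> S \<Longrightarrow> k \<le> m \<Longrightarrow> set_pow G S k \<subseteq> set_pow G S m"
proof (induction m)
  case 0 then show ?case by simp
next
  case (Suc m)
  then show ?case using set_pow_Suc_mono[OF Suc.prems(1,2), of m] by (auto simp: le_Suc_eq)
qed

lemma set_pow_lmult: "S \<subseteq> carrier G \<Longrightarrow> s \<in> S \<Longrightarrow> y \<in> set_pow G S k \<Longrightarrow> s \<otimes> y \<in> set_pow G S (Suc k)"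
proof (induction k arbitrary: y)
  case 0
  then have "s \<otimes> y = \<one> \<otimes> s" by auto
  then show ?case using 0 set_pow_mult[of "\<one>" S 0 s] by simp
next
  case (Suc k)
  from Suc.prems(3) obtain x t where xt: "y = x \<otimes> t" "x \<in> set_pow G S k" "t \<in> S"
    by (rule set_pow_SucE)
  then have "s \<otimes> x \<in> set_pow G S (Suc k)" using Suc by auto
  moreover have "x \<in> carrier G" "t \<in> carrier G" "s \<in> carrier G" using xt Suc.prems set_pow_carrier[OF Suc.prems(1)] by auto
  then have "s \<otimes> y = (s \<otimes> x) \<otimes> t" using xt by (simp add: m_assoc)
  ultimately show ?case using xt set_pow_mult by metis
qed

lemma set_pow_inv: "S \<subseteq> carrier G \<Longrightarrow> \<forall>s\<in>S. inv s \<in> S \<Longrightarrow> x \<in> set_pow G S k \<Longrightarrow> inv x \<in> set_pow G S k"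
proof (induction k arbitrary: x)
  case 0 then show ?case by auto
next
  case (Suc k)
  from Suc.prems(3) obtain y t where yt: "x = y \<otimes> t" "y \<in> set_pow G S k" "t \<in> S"
    by (rule set_pow_SucE)
  have "y \<in> carrier G" "t \<in> carrier G" using yt Suc.prems set_pow_carrier[OF Suc.prems(1)] by auto
  then have "inv x = inv t \<otimes> inv y" using yt by (simp add: inv_mult_group)
  then show ?case using Suc yt set_pow_lmult by auto
qed

lemma grp1: "a \<in> carrier G \<Longrightarrow> b \<in> carrier G \<Longrightarrow> c \<in> carrier G \<Longrightarrow> (inv a \<otimes> b) \<otimes> (inv b \<otimes> c) = inv a \<otimes> c"
  by (simp add: m_assoc[symmetric]) (simp add: m_assoc)

lemma eval3: "x \<in> carrier G \<Longrightarrow> y \<in> carrier G \<Longrightarrow> x \<otimes> y = z \<Longrightarrow> word_eval G [(x, False), (y, False), (z, True)] = \<one>"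
  by (auto simp: letter_val_def m_assoc[symmetric])

end

locale p2 = group +
  fixes S :: "'a set" and N :: nat
  assumes SC: "S \<subseteq> carrier G" and S1: "\<one> \<in> S" and Sinv: "\<forall>s\<in>S. inv s \<in> S"
begin

abbreviation "T \<equiv> set_pow G S (Suc N)"
abbreviation "RR \<equiv> rels3 G T"

lemma TC: "T \<subseteq> carrier G" using set_pow_carrier SC by blast

lemma ST: "S \<subseteq> T"
  using set_pow_one[OF SC] set_pow_mono[OF SC S1, of 1 "Suc N"] by simp

lemma NT: "set_pow G S N \<subseteq> T" using set_pow_Suc_mono[OF SC S1] .

lemma T1: "\<one> \<in> T" using ST S1 by blast

lemma rel3:
  assumes "fst l1 \<in> T" "fst l2 \<in> T" "c \<in> T" "word_eval G [l1, l2, (c, b)] = \<one>"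
  shows "([l1, l2], [(c, \<not> b)]) \<in> peq T RR"
proof -
  have a: "([l1, l2] @ [(c, b), (c, \<not> b)] @ [], [l1, l2] @ []) \<in> peq T RR"
    using assms by (intro peq_cancel) auto
  have "[l1, l2, (c, b)] \<in> RR" unfolding rels3_def using assms by auto
  then have b: "([] @ [l1, l2, (c, b)] @ [(c, \<not> b)], [] @ [(c, \<not> b)]) \<in> peq T RR"
    using assms by (intro peq_rel) auto
  show ?thesis using peq_trans[OF peq_sym[OF a[simplified]] b[simplified]] .
qed

lemma rel3pos:
  assumes "x \<in> T" "y \<in> T" "z \<in> T" "x \<otimes> y = z"
  shows "([(x, False), (y, False)], [(z, False)]) \<in> peq T RR"
  using rel3[of "(x, False)" "(y, False)" z True] assms eval3 TC by auto

lemma one_del: "([(\<one>, False)], []) \<in> peq T RR"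
proof -
  have a: "([(\<one>, False)] @ [(\<one>, False), (\<one>, \<not> False)] @ [], [(\<one>, False)] @ []) \<in> peq T RR"
    using T1 by (intro peq_cancel) auto
  have "[(\<one>, False), (\<one>, False), (\<one>, True)] \<in> RR" unfolding rels3_def using T1
    by (auto simp: letter_val_def)
  then have b: "([] @ [(\<one>, False), (\<one>, False), (\<one>, True)] @ [], [] @ []) \<in> peq T RR"
    by (intro peq_rel) auto
  show ?thesis using peq_trans[OF peq_sym[OF a[simplified]] b[simplified]] .
qed

lemma one_del_ctx: "is_word T a \<Longrightarrow> is_word T b \<Longrightarrow> (a @ [(\<one>, False)] @ b, a @ b) \<in> peq T RR"
  using peq_ctx[OF one_del] by fastforce

definition posS :: "'a word \<Rightarrow> bool" where
  "posS u \<longleftrightarrow> is_word S u \<and> (\<forall>l\<in>set u. snd l = False)"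

lemma posS_simps[simp]: "posS []" "posS (u @ v) \<longleftrightarrow> posS u \<and> posS v"
  "posS [l] \<longleftrightarrow> fst l \<in> S \<and> snd l = False"
  by (auto simp: posS_def)

lemma posS_T: "posS u \<Longrightarrow> is_word T u"
  using ST is_word_mono posS_def by blast

lemma posS_C: "posS u \<Longrightarrow> is_word (carrier G) u"
  using SC is_word_mono posS_def by blast

lemma pos_red:
  "k \<le> Suc N \<Longrightarrow> t \<in> set_pow G S k \<Longrightarrow>
   \<exists>u. posS u \<and> word_eval G u = t \<and> ([(t, False)], u) \<in> peq T RR"
proof (induction k arbitrary: t)
  case 0
  then show ?case using one_del by (intro exI[of _ "[]"]) auto
next
  case (Suc k)
  from Suc.prems(2) obtain x s where xs: "t = x \<otimes> s" "x \<in> set_pow G S k" "s \<in> S"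
    by (rule set_pow_SucE)
  obtain u where u: "posS u" "word_eval G u = x" "([(x, False)], u) \<in> peq T RR"
    using Suc xs by auto
  have xT: "x \<in> T" using xs(2) set_pow_mono[OF SC S1, of k "Suc N"] Suc by auto
  have sT: "s \<in> T" using xs ST by auto
  have tT: "t \<in> T" using Suc set_pow_mono[OF SC S1, of "Suc k" "Suc N"] by auto
  have r: "([(x, False), (s, False)], [(t, False)]) \<in> peq T RR"
    using rel3pos[OF xT sT tT] xs by simp
  have r2: "([(x, False)] @ [(s, False)], u @ [(s, False)]) \<in> peq T RR"
    using peq_right[OF u(3)] sT by simp
  have "([(t, False)], u @ [(s, False)]) \<in> peq T RR"
    using peq_trans[OF peq_sym[OF r]] r2 by simp
  moreover have "posS (u @ [(s, False)])" using u xs by simp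
  moreover have "word_eval G (u @ [(s, False)]) = t"
    using u xs SC posS_C by (auto simp: word_eval_append letter_val_def)
  ultimately show ?case by blast
qed

lemma letter_red:
  assumes "fst l \<in> T"
  shows "\<exists>u. posS u \<and> word_eval G u = letter_val G l \<and> ([l], u) \<in> peq T RR"
proof (cases l)
  case (Pair t b)
  show ?thesis
  proof (cases b)
    case False
    then show ?thesis using pos_red[of "Suc N" t] assms Pair by (auto simp: letter_val_def)
  next
    case True
    have tc: "t \<in> carrier G" using assms Pair TC by auto
    have t'T: "inv t \<in> T" using set_pow_inv[OF SC Sinv] assms Pair by auto
    have "word_eval G [(t, True), (\<one>, False), (inv t, True)] = \<one>"
      using tc by (auto simp: letter_val_def)
    then have a: "([(t, True), (\<one>, False)], [(inv t, False)]) \<in> peq T RR"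
      using rel3[of "(t, True)" "(\<one>, False)" "inv t" True] assms Pair True T1 t'T by auto
    have b: "([(t, True)] @ [(\<one>, False)] @ [], [(t, True)] @ []) \<in> peq T RR"
      using one_del_ctx[of "[(t, True)]" "[]"] assms Pair by simp
    obtain u where u: "posS u" "word_eval G u = inv t" "([(inv t, False)], u) \<in> peq T RR"
      using pos_red[of "Suc N" "inv t"] t'T by auto
    have "([(t, True)], u) \<in> peq T RR"
      using peq_trans[OF peq_sym[OF b[simplified]] peq_trans[OF a u(3)]] .
    then show ?thesis using u Pair True by (auto simp: letter_val_def)
  qed
qed

lemma word_red:
  "is_word T w \<Longrightarrow> \<exists>u. posS u \<and> word_eval G u = word_eval G w \<and> (w, u) \<in> peq T RR"
proof (induction w)
  case Nil then show ?case using peq_refl by (intro exI[of _ "[]"]) auto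
next
  case (Cons l w)
  have "fst l \<in> T" using Cons.prems by simp
  then obtain u1 where u1: "posS u1" "word_eval G u1 = letter_val G l" "([l], u1) \<in> peq T RR"
    using letter_red by blast
  obtain u2 where u2: "posS u2" "word_eval G u2 = word_eval G w" "(w, u2) \<in> peq T RR"
    using Cons.IH Cons.prems by auto
  have "([l] @ w, u1 @ u2) \<in> peq T RR"
    using peq_app[OF u1(3) u2(3)] Cons posS_T[OF u1(1)] by auto
  moreover have "word_eval G (u1 @ u2) = word_eval G (l # w)"
    using u1 u2 posS_C by (simp add: word_eval_append)
  ultimately show ?case using u1 u2 by (intro exI[of _ "u1 @ u2"]) auto
qed

end


lemma rel_pred:
  fixes n m i j :: nat
  assumes c1: "\<forall>i<n. \<exists>j. (i, j) \<in> Rel" and c2: "\<forall>j<m. \<exists>i. (i, j) \<in> Rel"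
    and sub: "Rel \<subseteq> {0..<n} \<times> {0..<m}"
    and mono: "\<forall>i1 j1 i2 j2. (i1, j1) \<in> Rel \<and> (i2, j2) \<in> Rel \<and> i1 < i2 \<longrightarrow> j1 \<le> j2"
    and ij: "(i, j) \<in> Rel" and nz: "0 < i + j"
  shows "(\<exists>i'. i = Suc i' \<and> (i', j) \<in> Rel) \<or> (\<exists>j'. j = Suc j' \<and> (i, j') \<in> Rel)
         \<or> (\<exists>i' j'. i = Suc i' \<and> j = Suc j' \<and> (i', j') \<in> Rel)"
proof -
  have il: "i < n" "j < m" using ij sub by auto
  show ?thesis
  proof (cases i)
    case 0
    then obtain j' where j': "j = Suc j'" using nz by (cases j) auto
    moreover have "j' < m" using il j' by simp
    then obtain i'' where i'': "(i'', j') \<in> Rel" using c2 by blast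
    have "\<not> 0 < i''" using mono ij i'' j' 0 by fastforce
    then show ?thesis using i'' j' 0 by auto
  next
    case (Suc i')
    show ?thesis
    proof (cases j)
      case 0
      have "i' < n" using il Suc by simp
      then obtain j'' where j'': "(i', j'') \<in> Rel" using c1 by blast
      have "\<not> 0 < j''" using mono ij j'' Suc 0 by fastforce
      then show ?thesis using j'' Suc 0 by auto
    next
      case (Suc j')
      note ii = \<open>i = Suc i'\<close>
      have "i' < n" "j' < m" using il ii Suc by auto
      then obtain j'' i'' where j'': "(i', j'') \<in> Rel" and i'': "(i'', j') \<in> Rel" using c1 c2 by blast
      have a: "j'' \<le> j" using mono j'' ij ii by auto
      have b: "i'' \<le> i" using mono i'' ij Suc by (metis Suc_n_not_le_n not_le)
      show ?thesis
      proof (cases "j'' \<ge> j'")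
        case True
        then have "j'' = j \<or> j'' = j'" using a Suc by auto
        then show ?thesis using j'' ii Suc by auto
      next
        case False
        have "\<not> i'' < i'" using mono i'' j'' False by fastforce
        then have "i'' = i' \<or> i'' = i" using b ii by auto
        then show ?thesis using i'' ii Suc by auto
      qed
    qed
  qed
qed

lemma rel_last:
  fixes n m :: nat
  assumes c1: "\<forall>i<n. \<exists>j. (i, j) \<in> Rel" and c2: "\<forall>j<m. \<exists>i. (i, j) \<in> Rel"
    and sub: "Rel \<subseteq> {0..<n} \<times> {0..<m}"
    and mono: "\<forall>i1 j1 i2 j2. (i1, j1) \<in> Rel \<and> (i2, j2) \<in> Rel \<and> i1 < i2 \<longrightarrow> j1 \<le> j2"
    and "0 < n" "0 < m"
  shows "(n - 1, m - 1) \<in> Rel"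
proof -
  have "n - 1 < n" "m - 1 < m" using assms(5,6) by auto
  then obtain j i where j: "(n - 1, j) \<in> Rel" and i: "(i, m - 1) \<in> Rel" using c1 c2 by blast
  have "i < n" "j < m" using i j sub by auto
  show ?thesis
  proof (cases "i < n - 1")
    case True
    then have "m - 1 \<le> j" using mono i j by blast
    then have "j = m - 1" using \<open>j < m\<close> by arith
    then show ?thesis using j by simp
  next
    case False
    then have "i = n - 1" using \<open>i < n\<close> by arith
    then show ?thesis using i by simp
  qed
qed



context p2 begin

lemma key:
  assumes g: "closed_S_curve_at G S \<one> g" and h: "closed_S_curve_at G S \<one> h"
    and w: "dU_witness G S g h N"
  shows "(wordof G g, wordof G h) \<in> peq T RR"
proof -
  obtain Rel where sub: "Rel \<subseteq> {0..<length g} \<times> {0..<length h}"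
    and c1: "\<forall>i<length g. \<exists>j. (i, j) \<in> Rel" and c2: "\<forall>j<length h. \<exists>i. (i, j) \<in> Rel"
    and mono: "\<forall>i1 j1 i2 j2. (i1, j1) \<in> Rel \<and> (i2, j2) \<in> Rel \<and> i1 < i2 \<longrightarrow> j1 \<le> j2"
    and val: "\<forall>(i, j)\<in>Rel. inv (g ! i) \<otimes> (h ! j) \<in> set_pow G S N"
    using w unfolding dU_witness_def by blast
  have gs: "S_curve G S g" "hd g = \<one>" "last g = \<one>" using g unfolding closed_S_curve_at_def by auto
  have hs: "S_curve G S h" "hd h = \<one>" "last h = \<one>" using h unfolding closed_S_curve_at_def by auto
  have gne: "g \<noteq> []" "set g \<subseteq> carrier G"
    and gst: "\<And>j. 0 < j \<Longrightarrow> j < length g \<Longrightarrow> inv (g ! (j - 1)) \<otimes> g ! j \<in> S"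
    using gs(1) unfolding S_curve_def by auto
  have hne: "h \<noteq> []" "set h \<subseteq> carrier G"
    and hst: "\<And>j. 0 < j \<Longrightarrow> j < length h \<Longrightarrow> inv (h ! (j - 1)) \<otimes> h ! j \<in> S"
    using hs(1) unfolding S_curve_def by auto
  have gc: "\<And>i. i < length g \<Longrightarrow> g ! i \<in> carrier G" using gne(2) nth_mem by blast
  have hc: "\<And>i. i < length h \<Longrightarrow> h ! i \<in> carrier G" using hne(2) nth_mem by blast
  define Wg where "Wg = wordof G g"
  define Wh where "Wh = wordof G h"
  define c where "c i j = inv (g ! i) \<otimes> h ! j" for i j
  have cN: "\<And>i j. (i, j) \<in> Rel \<Longrightarrow> c i j \<in> set_pow G S N" using val c_def by auto
  have cT: "\<And>i j. (i, j) \<in> Rel \<Longrightarrow> c i j \<in> T" using cN NT by auto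
  have wgT: "is_word T Wg" using wordof_is_word[OF gs(1)] ST is_word_mono Wg_def by blast
  have whT: "is_word T Wh" using wordof_is_word[OF hs(1)] ST is_word_mono Wh_def by blast
  have tg: "\<And>i. Suc i < length g \<Longrightarrow> take (Suc i) Wg = take i Wg @ [(inv (g ! i) \<otimes> g ! Suc i, False)]"
    by (simp add: Wg_def take_Suc_conv_app_nth wordof_nth)
  have th: "\<And>j. Suc j < length h \<Longrightarrow> take (Suc j) Wh = take j Wh @ [(inv (h ! j) \<otimes> h ! Suc j, False)]"
    by (simp add: Wh_def take_Suc_conv_app_nth wordof_nth)
  have sg: "\<And>i. Suc i < length g \<Longrightarrow> inv (g ! i) \<otimes> g ! Suc i \<in> S" using gst by force
  have sh: "\<And>j. Suc j < length h \<Longrightarrow> inv (h ! j) \<otimes> h ! Suc j \<in> S" using hst by force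
  have claim: "\<forall>i j. i + j = k \<longrightarrow> (i, j) \<in> Rel \<longrightarrow> (take i Wg @ [(c i j, False)], take j Wh) \<in> peq T RR" for k
  proof (induction k rule: less_induct)
    case (less k)
    show ?case
    proof (intro allI impI)
      fix i j assume ij: "i + j = k" "(i, j) \<in> Rel"
      have il: "i < length g" "j < length h" using ij sub by auto
      have pT: "is_word T (take i Wg)" using is_word_take wgT by blast
      show "(take i Wg @ [(c i j, False)], take j Wh) \<in> peq T RR"
      proof (cases "i + j = 0")
        case True
        then have "c i j = \<one>" using c_def gs hs gne hne by (simp add: hd_conv_nth)
        then show ?thesis using True one_del by simp
      next
        case False
        from rel_pred[OF c1 c2 sub mono ij(2)] False consider
          (A) i' where "i = Suc i'" "(i', j) \<in> Rel"
        | (B) j' where "j = Suc j'" "(i, j') \<in> Rel"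
        | (C) i' j' where "i = Suc i'" "j = Suc j'" "(i', j') \<in> Rel" by auto
        then show ?thesis
        proof cases
          case A
          have IH: "(take i' Wg @ [(c i' j, False)], take j Wh) \<in> peq T RR"
            using less.IH[of "i' + j"] A ij by auto
          let ?s = "inv (g ! i') \<otimes> g ! i"
          have sS: "?s \<in> S" using sg[of i'] A il by simp
          have e: "?s \<otimes> c i j = c i' j" unfolding c_def using grp1 gc hc il A by simp
          have r: "([(?s, False), (c i j, False)], [(c i' j, False)]) \<in> peq T RR"
            using rel3pos[OF _ cT[OF ij(2)] cT[OF A(2)] e] sS ST by auto
          have pT': "is_word T (take i' Wg)" using is_word_take wgT by blast
          have "(take i' Wg @ [(?s, False), (c i j, False)], take i' Wg @ [(c i' j, False)]) \<in> peq T RR"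
            using peq_left[OF r pT'] by simp
          then have "(take i' Wg @ [(?s, False), (c i j, False)], take j Wh) \<in> peq T RR"
            using peq_trans IH by blast
          moreover have "take i Wg @ [(c i j, False)] = take i' Wg @ [(?s, False), (c i j, False)]"
            using tg[of i'] A il by simp
          ultimately show ?thesis by simp
        next
          case B
          have IH: "(take i Wg @ [(c i j', False)], take j' Wh) \<in> peq T RR"
            using less.IH[of "i + j'"] B ij by auto
          let ?s = "inv (h ! j') \<otimes> h ! j"
          have sS: "?s \<in> S" using sh[of j'] B il by simp
          have e: "c i j' \<otimes> ?s = c i j" unfolding c_def using grp1 gc hc il B by simp
          have r: "([(c i j', False), (?s, False)], [(c i j, False)]) \<in> peq T RR"
            using rel3pos[OF cT[OF B(2)] _ cT[OF ij(2)] e] sS ST by auto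
          have r1: "(take i Wg @ [(c i j', False), (?s, False)], take i Wg @ [(c i j, False)]) \<in> peq T RR"
            using peq_left[OF r pT] by simp
          have r2: "(take i Wg @ [(c i j', False), (?s, False)], take j' Wh @ [(?s, False)]) \<in> peq T RR"
            using peq_right[OF IH, of "[(?s, False)]"] sS ST by auto
          have "take j Wh = take j' Wh @ [(?s, False)]"
            using th[of j'] B il by simp
          then show ?thesis using peq_trans[OF peq_sym[OF r1] r2] by simp
        next
          case C
          have IH: "(take i' Wg @ [(c i' j', False)], take j' Wh) \<in> peq T RR"
            using less.IH[of "i' + j'"] C ij by auto
          let ?s = "inv (g ! i') \<otimes> g ! i"
          let ?s' = "inv (h ! j') \<otimes> h ! j"
          let ?d = "c i' j' \<otimes> ?s'"
          have sS: "?s \<in> S" using sg[of i'] C il by simp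
          have sS': "?s' \<in> S" using sh[of j'] C il by simp
          have dT: "?d \<in> T" using set_pow_mult[OF cN[OF C(3)] sS'] .
          have e1: "?s \<otimes> c i j = ?d" unfolding c_def using grp1 gc hc il C by simp
          have r1: "([(?s, False), (c i j, False)], [(?d, False)]) \<in> peq T RR"
            using rel3pos[OF _ cT[OF ij(2)] dT e1] sS ST by auto
          have r2: "([(c i' j', False), (?s', False)], [(?d, False)]) \<in> peq T RR"
            using rel3pos[OF cT[OF C(3)] _ dT refl] sS' ST by auto
          have pT': "is_word T (take i' Wg)" using is_word_take wgT by blast
          have a1: "(take i' Wg @ [(?s, False), (c i j, False)], take i' Wg @ [(?d, False)]) \<in> peq T RR"
            using peq_left[OF r1 pT'] by simp
          have a2: "(take i' Wg @ [(?d, False)], take i' Wg @ [(c i' j', False), (?s', False)]) \<in> peq T RR"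
            using peq_left[OF peq_sym[OF r2] pT'] by simp
          have a3: "(take i' Wg @ [(c i' j', False), (?s', False)], take j' Wh @ [(?s', False)]) \<in> peq T RR"
            using peq_right[OF IH, of "[(?s', False)]"] sS' ST by auto
          have "take j Wh = take j' Wh @ [(?s', False)]"
            using th[of j'] C il by simp
          moreover have "take i Wg @ [(c i j, False)] = take i' Wg @ [(?s, False), (c i j, False)]"
            using tg[of i'] C il by simp
          ultimately show ?thesis using peq_trans[OF a1 peq_trans[OF a2 a3]] by simp
        qed
      qed
    qed
  qed
  have lg: "0 < length g" "0 < length h" using gne hne by auto
  have last: "(length g - 1, length h - 1) \<in> Rel" using rel_last[OF c1 c2 sub mono lg] .
  have e1: "c (length g - 1) (length h - 1) = \<one>"
    using gs hs gne hne by (simp add: c_def last_conv_nth)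
  have e2: "take (length g - 1) Wg = Wg" and e3: "take (length h - 1) Wh = Wh" by (simp_all add: Wg_def Wh_def)
  have X: "(take (length g - 1) Wg @ [(c (length g - 1) (length h - 1), False)], take (length h - 1) Wh) \<in> peq T RR"
    using claim[of "length g - 1 + (length h - 1)"] last by blast
  have "(Wg @ [(\<one>, False)], Wh) \<in> peq T RR" using X unfolding e1 e2 e3 .
  moreover have "(Wg @ [(\<one>, False)], Wg) \<in> peq T RR" using one_del_ctx[OF wgT, of "[]"] by simp
  ultimately show ?thesis unfolding Wg_def Wh_def using peq_trans peq_sym by blast
qed

end


lemma dU_obtain:
  assumes "dU G S g h \<le> enat N"
  shows "\<exists>r\<le>N. dU_witness G S g h r"
proof -
  let ?A = "{r. dU_witness G S g h r}"
  have ne: "?A \<noteq> {}"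
  proof
    assume "?A = {}"
    then have "dU G S g h = \<infinity>" unfolding dU_def by (subst \<open>?A = {}\<close>) (simp add: top_enat_def)
    then show False using assms by simp
  qed
  define r0 where "r0 = (LEAST r. r \<in> ?A)"
  have r0A: "r0 \<in> ?A" using ne r0_def by (metis LeastI_ex ex_in_conv)
  have "enat r0 \<le> dU G S g h" unfolding dU_def
    by (rule INF_greatest) (simp add: r0_def Least_le)
  then have "r0 \<le> N" using assms by (meson enat_ord_simps(1) order_trans)
  then show ?thesis using r0A by blast
qed

context p2 begin

lemma witness_mono:
  assumes w: "dU_witness G S g h r" and rN: "r \<le> N"
  shows "dU_witness G S g h N"
proof -
  obtain Rel where P: "Rel \<subseteq> {0..<length g} \<times> {0..<length h}"
    "\<forall>i<length g. \<exists>j. (i, j) \<in> Rel" "\<forall>j<length h. \<exists>i. (i, j) \<in> Rel"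
    "\<forall>i1 j1 i2 j2. (i1, j1) \<in> Rel \<and> (i2, j2) \<in> Rel \<and> i1 < i2 \<longrightarrow> j1 \<le> j2"
    "\<forall>(i, j)\<in>Rel. inv (g ! i) \<otimes> (h ! j) \<in> set_pow G S r"
    using w unfolding dU_witness_def by blast
  have sub: "set_pow G S r \<subseteq> set_pow G S N" by (rule set_pow_mono[OF SC S1 rN])
  have "\<forall>(i, j)\<in>Rel. inv (g ! i) \<otimes> (h ! j) \<in> set_pow G S N" using P(5) sub by auto
  then show ?thesis unfolding dU_witness_def using P(1-4) by blast
qed

lemma part2:
  assumes gen: "generate G S = carrier G"
    and hyp: "\<forall>\<gamma>0. closed_S_curve_at G S \<one> \<gamma>0 \<longrightarrow>
               (\<exists>(n::nat) (\<gamma>::nat \<Rightarrow> 'a list). \<gamma> 0 = \<gamma>0 \<and>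
                  (\<forall>j\<in>{1..n}. closed_S_curve_at G S \<one> (\<gamma> j) \<and>
                               dU G S (\<gamma> (j - 1)) (\<gamma> j) \<le> enat N) \<and>
                  \<gamma> n = [\<one>])"
  shows "determining_set G T"
proof -
  have g1: "generate G S \<subseteq> generate G T" by (rule mono_generate[OF ST])
  have g2: "generate G T \<subseteq> carrier G" by (rule generate_incl[OF TC])
  have genT: "generate G T = carrier G" using g1 g2 unfolding gen by (rule subset_antisym[rotated])
  have triv: "pres_trivial T RR w" if w: "is_word T w" "word_eval G w = \<one>" for w
  proof -
    obtain u where u: "posS u" "word_eval G u = \<one>" "(w, u) \<in> peq T RR"
      using word_red[OF w(1)] w(2) by auto
    have uS: "is_word S u" using u(1) posS_def by blast
    have cl0: "closed_S_curve_at G S \<one> (curve G u)"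
      unfolding closed_S_curve_at_def using curve_S_curve[OF uS SC Sinv] curve_hd curve_last u(2) by simp
    obtain n :: nat and \<gamma> :: "nat \<Rightarrow> 'a list" where g0: "\<gamma> 0 = curve G u"
      and gj: "\<forall>j\<in>{1..n}. closed_S_curve_at G S \<one> (\<gamma> j) \<and> dU G S (\<gamma> (j - 1)) (\<gamma> j) \<le> enat N"
      and gn: "\<gamma> n = [\<one>]"
      using hyp[rule_format, OF cl0] by blast
    have cl: "closed_S_curve_at G S \<one> (\<gamma> j)" if "j \<le> n" for j
      using gj g0 cl0 that by (cases j) auto
    have chain: "(wordof G (\<gamma> 0), wordof G (\<gamma> j)) \<in> peq T RR" if "j \<le> n" for j
      using that
    proof (induction j)
      case 0 show ?case by (rule peq_refl)
    next
      case (Suc j)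
      have "Suc j \<in> {1..n}" using Suc.prems by simp
      then have "dU G S (\<gamma> j) (\<gamma> (Suc j)) \<le> enat N" using gj by fastforce
      then obtain r where "r \<le> N" "dU_witness G S (\<gamma> j) (\<gamma> (Suc j)) r" using dU_obtain by blast
      then have "dU_witness G S (\<gamma> j) (\<gamma> (Suc j)) N" using witness_mono by blast
      moreover have "j \<le> n" "Suc j \<le> n" using Suc.prems by auto
      ultimately have "(wordof G (\<gamma> j), wordof G (\<gamma> (Suc j))) \<in> peq T RR"
        using key[OF cl[of j] cl[of "Suc j"]] by blast
      moreover have "(wordof G (\<gamma> 0), wordof G (\<gamma> j)) \<in> peq T RR" using Suc by simp
      ultimately show ?case using peq_trans by blast
    qed
    have "\<forall>l\<in>set u. snd l = False" using u(1) unfolding posS_def by blast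
    then have "wordof G (\<gamma> 0) = u" unfolding g0 by (rule wordof_curve[OF posS_C[OF u(1)]])
    moreover have "wordof G (\<gamma> n) = []" using gn by (simp add: wordof_def)
    ultimately have "(u, []) \<in> peq T RR" using chain[of n] by simp
    then have "(w, []) \<in> peq T RR" using u(3) peq_trans by blast
    then show ?thesis unfolding pres_trivial_def peq_def .
  qed
  have hp: "has_presentation G T RR"
    unfolding has_presentation_def
  proof (intro conjI)
    show "T \<subseteq> carrier G" by (rule TC)
    show "generate G T = carrier G" by (rule genT)
    show "\<forall>r\<in>RR. is_word T r \<and> word_eval G r = \<one>" by (simp add: rels3_def)
    show "\<forall>w. is_word T w \<and> word_eval G w = \<one> \<longrightarrow> pres_trivial T RR w" using triv by blast
  qed
  have l3: "\<forall>r\<in>RR. length r = 3" by (simp add: rels3_def)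
  show ?thesis unfolding determining_set_def
  proof (intro conjI)
    show "T \<subseteq> carrier G" by (rule TC)
    show "\<one> \<in> T" by (rule T1)
    show "generate G T = carrier G" by (rule genT)
    show "\<exists>R. (\<forall>r\<in>R. length r = 3) \<and> has_presentation G T R"
      using hp l3 by (intro exI[of _ RR]) simp
  qed
qed

end

theorem mainTheorem15:
  fixes G :: "('a, 'b) monoid_scheme" and S :: "'a set"
  assumes "group G"
    and "S \<subseteq> carrier G"
    and "\<forall>s\<in>S. inv\<^bsub>G\<^esub> s \<in> S"
    and "\<one>\<^bsub>G\<^esub> \<in> S"
    and "generate G S = carrier G"
  shows "(determining_set G S \<longrightarrow>
            (\<forall>\<gamma>0. closed_S_curve_at G S \<one>\<^bsub>G\<^esub> \<gamma>0 \<longrightarrow>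
               (\<exists>(n::nat) (\<gamma>::nat \<Rightarrow> 'a list). \<gamma> 0 = \<gamma>0 \<and>
                  (\<forall>j\<in>{1..n}. closed_S_curve_at G S \<one>\<^bsub>G\<^esub> (\<gamma> j) \<and>
                               dU G S (\<gamma> (j - 1)) (\<gamma> j) \<le> 1) \<and>
                  \<gamma> n = [\<one>\<^bsub>G\<^esub>])))
       \<and> (\<forall>N::nat.
            (\<forall>\<gamma>0. closed_S_curve_at G S \<one>\<^bsub>G\<^esub> \<gamma>0 \<longrightarrow>
               (\<exists>(n::nat) (\<gamma>::nat \<Rightarrow> 'a list). \<gamma> 0 = \<gamma>0 \<and>
                  (\<forall>j\<in>{1..n}. closed_S_curve_at G S \<one>\<^bsub>G\<^esub> (\<gamma> j) \<and>
                               dU G S (\<gamma> (j - 1)) (\<gamma> j) \<le> enat N) \<and>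
                  \<gamma> n = [\<one>\<^bsub>G\<^esub>]))
            \<longrightarrow> determining_set G (set_pow G S (N + 1)))"
proof (intro conjI impI allI)
  fix \<gamma>0 assume det: "determining_set G S" and c: "closed_S_curve_at G S \<one>\<^bsub>G\<^esub> \<gamma>0"
  show "\<exists>(n::nat) (\<gamma>::nat \<Rightarrow> 'a list). \<gamma> 0 = \<gamma>0 \<and>
                  (\<forall>j\<in>{1..n}. closed_S_curve_at G S \<one>\<^bsub>G\<^esub> (\<gamma> j) \<and>
                               dU G S (\<gamma> (j - 1)) (\<gamma> j) \<le> 1) \<and>
                  \<gamma> n = [\<one>\<^bsub>G\<^esub>]"
    by (rule group.part1[OF assms(1) assms(2) assms(3) assms(4) det c])
next
  fix N :: nat
  assume hyp: "\<forall>\<gamma>0. closed_S_curve_at G S \<one>\<^bsub>G\<^esub> \<gamma>0 \<longrightarrow>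
               (\<exists>(n::nat) (\<gamma>::nat \<Rightarrow> 'a list). \<gamma> 0 = \<gamma>0 \<and>
                  (\<forall>j\<in>{1..n}. closed_S_curve_at G S \<one>\<^bsub>G\<^esub> (\<gamma> j) \<and>
                               dU G S (\<gamma> (j - 1)) (\<gamma> j) \<le> enat N) \<and>
                  \<gamma> n = [\<one>\<^bsub>G\<^esub>])"
  interpret P: p2 G S N by (intro p2.intro assms(1) p2_axioms.intro assms(2,3,4))
  show "determining_set G (set_pow G S (N + 1))" using P.part2[OF assms(5) hyp] by simp
qed

end
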